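(* For all ideals $\mathcal{I}$ and $\mathcal{J}$ on $\omega$, $\rho^{(\mathrm{FIN}\otimes\mathcal{I})}\not\approx_K\rho_{\mathcal{J}}$ (for any choice of almost disjoint family and enumeration in the definition of $\rho^{(\mathrm{FIN}\otimes\mathcal{I})}$).
   Context: An ideal on a set $X$: $\mathcal{J}\subseteq\mathcal{P}(X)$ with $\emptyset\in\mathcal{J}$, $X\notin\mathcal{J}$, closed under finite unions and subsets, containing all finite sets; $\mathcal{J}^+=\mathcal{P}(X)\setminus\mathcal{J}$. For an ideal $\mathcal{J}$ on $\omega$, $\rho_{\mathcal{J}}\colon\mathcal{J}^+\to[\omega]^\omega$, $\rho_{\mathcal{J}}(A)=A$ (domain family $\mathcal{J}^+\subseteq[\omega]^\omega$). $\mathrm{FIN}\otimes\mathcal{I}$ is the ideal on $\omega\times\omega$: $A\in\mathrm{FIN}\otimes\mathcal{I}$ iff $\{n:\{k:(n,k)\in A\}\notin\mathcal{I}\}$ is finite. Definition of $\rho^{(\mathrm{FIN}\otimes\mathcal{I})}$: let $\mathcal{A}=\{A_\alpha:\alpha<\mathfrak{c}\}$ be an almost disjoint family on $\omega$ (pairwise distinct infinite sets with pairwise finite intersections), $(\mathrm{FIN}\otimes\mathcal{I})^+=\{B_\alpha:\alpha<\mathfrak{c}\}$ an enumeration, $P_n=\{n\}\times\omega$, $\overline{\mathcal{A}}=\{A\setminus K:A\in\mathcal{A},K\in[\omega]^{<\omega}\}$, and $\rho^{(\mathrm{FIN}\otimes\mathcal{I})}(A_\alpha\setminus K)=B_\alpha\setminus\bigcup\{P_n:n<\max(K\cap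 A_\alpha)\}$, with $\max\emptyset=0$; it maps $\overline{\mathcal{A}}$ into $[\omega\times\omega]^\omega$. Katětov order for functions $\rho_i\colon\mathcal{F}_i\to[\Lambda_i]^\omega$ with $\mathcal{F}_i\subseteq[\Omega_i]^\omega$: $\rho_2\leq_K\rho_1$ if there is $f\colon\Lambda_1\to\Lambda_2$ such that for every $F_1\in\mathcal{F}_1$ there is $F_2\in\mathcal{F}_2$ such that for every finite $K_1\subseteq\Omega_1$ there is a finite $K_2\subseteq\Omega_2$ with $\rho_2(F_2\setminus K_2)\subseteq f[\rho_1(F_1\setminus K_1)]$. $\rho_1\approx_K\rho_2$ means $\rho_1\leq_K\rho_2$ and $\rho_2\leq_K\rho_1$. *)

theory Defs
  imports Main
begin

definition is_ideal :: "'a set \<Rightarrow> 'a set set \<Rightarrow> bool" where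
  "is_ideal X J \<longleftrightarrow> J \<subseteq> Pow X \<and> {} \<in> J \<and> X \<notin> J
     \<and> (\<forall>A\<in>J. \<forall>B\<in>J. A \<union> B \<in> J)
     \<and> (\<forall>A\<in>J. \<forall>B. B \<subseteq> A \<longrightarrow> B \<in> J)
     \<and> (\<forall>F. finite F \<and> F \<subseteq> X \<longrightarrow> F \<in> J)"

definition ideal_pos :: "'a set set \<Rightarrow> 'a set set" where
  "ideal_pos J = UNIV - J"

definition FIN_prod :: "nat set set \<Rightarrow> (nat \<times> nat) set set" where
  "FIN_prod I = {A. finite {n. {k. (n, k) \<in> A} \<notin> I}}"

text \<open>Katetov order for functions rho_i defined on families F_i:
  katetov_le F2 rho2 F1 rho1 means rho2 \<le>_K rho1.\<close>
definition katetov_le ::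
  "'o2 set set \<Rightarrow> ('o2 set \<Rightarrow> 'l2 set) \<Rightarrow> 'o1 set set \<Rightarrow> ('o1 set \<Rightarrow> 'l1 set) \<Rightarrow> bool" where
  "katetov_le F2 rho2 F1 rho1 \<longleftrightarrow>
     (\<exists>f :: 'l1 \<Rightarrow> 'l2. \<forall>X1\<in>F1. \<exists>X2\<in>F2. \<forall>K1. finite K1 \<longrightarrow>
        (\<exists>K2. finite K2 \<and> rho2 (X2 - K2) \<subseteq> f ` rho1 (X1 - K1)))"

definition katetov_equiv ::
  "'o1 set set \<Rightarrow> ('o1 set \<Rightarrow> 'l1 set) \<Rightarrow> 'o2 set set \<Rightarrow> ('o2 set \<Rightarrow> 'l2 set) \<Rightarrow> bool" where
  "katetov_equiv F1 rho1 F2 rho2 \<longleftrightarrow> katetov_le F1 rho1 F2 rho2 \<and> katetov_le F2 rho2 F1 rho1"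

definition almost_disjoint_family :: "('c \<Rightarrow> nat set) \<Rightarrow> bool" where
  "almost_disjoint_family A \<longleftrightarrow> inj A \<and> (\<forall>a. infinite (A a))
     \<and> (\<forall>a b. a \<noteq> b \<longrightarrow> finite (A a \<inter> A b))"

definition AD_closure :: "('c \<Rightarrow> nat set) \<Rightarrow> nat set set" where
  "AD_closure A = {A a - K | a K. finite K}"

definition max0 :: "nat set \<Rightarrow> nat" where
  "max0 S = (if S = {} then 0 else Max S)"

text \<open>rho^(FIN\<otimes>I)(A_alpha - K) = B_alpha minus the columns P_n for n < max(K \<inter> A_alpha).
  Note K \<inter> A_alpha = A_alpha - (A_alpha - K), so this is well-defined.\<close>
definition rho_FIN :: "('c \<Rightarrow> nat set) \<Rightarrow> ('c \<Rightarrow> (nat \<times> nat) set) \<Rightarrow> nat set \<Rightarrow> (nat \<times> nat) set" where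
  "rho_FIN A B X =
     (let a = (THE a. \<exists>K. finite K \<and> X = A a - K)
      in B a - {p. fst p < max0 (A a - X)})"

end

theory Submission
  imports Defs
begin

lemma idealD:
  assumes "is_ideal UNIV I"
  shows "UNIV \<notin> I" "\<And>F. finite F \<Longrightarrow> F \<in> I"
    "\<And>X Y. X \<in> I \<Longrightarrow> Y \<subseteq> X \<Longrightarrow> Y \<in> I"
    "\<And>X Y. X \<in> I \<Longrightarrow> Y \<in> I \<Longrightarrow> X \<union> Y \<in> I"
  using assms unfolding is_ideal_def by simp_all

lemma ideal_UN:
  assumes "is_ideal UNIV I" "finite C" "\<forall>c\<in>C. F c \<in> I"
  shows "(\<Union>c\<in>C. F c) \<in> I"
  using assms(2,3)
proof (induction C rule: finite_induct)
  case empty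
  then show ?case using idealD(2)[OF assms(1), of "{}"] by simp
next
  case (insert x C)
  then show ?case using idealD(4)[OF assms(1)] by simp
qed

lemma FIN_mono:
  assumes "is_ideal UNIV I" "T \<subseteq> S" "S \<in> FIN_prod I"
  shows "T \<in> FIN_prod I"
proof -
  have "{n. {k. (n, k) \<in> T} \<notin> I} \<subseteq> {n. {k. (n, k) \<in> S} \<notin> I}"
  proof (rule subsetI, rule CollectI)
    fix n assume n: "n \<in> {n. {k. (n, k) \<in> T} \<notin> I}"
    show "{k. (n, k) \<in> S} \<notin> I"
    proof
      assume "{k. (n, k) \<in> S} \<in> I"
      moreover have "{k. (n, k) \<in> T} \<subseteq> {k. (n, k) \<in> S}" using assms(2) by auto
      ultimately have "{k. (n, k) \<in> T} \<in> I" by (rule idealD(3)[OF assms(1)])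
      then show False using n by simp
    qed
  qed
  moreover have "finite {n. {k. (n, k) \<in> S} \<notin> I}" using assms(3) unfolding FIN_prod_def by simp
  ultimately have "finite {n. {k. (n, k) \<in> T} \<notin> I}" by (rule finite_subset)
  then show ?thesis unfolding FIN_prod_def by simp
qed

lemma pos_shift:
  assumes "Bs \<notin> FIN_prod I"
  shows "Bs - {p. fst p < m} \<notin> FIN_prod I"
proof
  assume a: "Bs - {p. fst p < m} \<in> FIN_prod I"
  have "{n. {k. (n, k) \<in> Bs} \<notin> I} \<subseteq> {n. {k. (n, k) \<in> Bs - {p. fst p < m}} \<notin> I} \<union> {..<m}"
    by auto
  moreover have "finite ({n. {k. (n, k) \<in> Bs - {p. fst p < m}} \<notin> I} \<union> {..<m})"
    using a unfolding FIN_prod_def by simp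
  ultimately have "finite {n. {k. (n, k) \<in> Bs} \<notin> I}" by (rule finite_subset)
  then show False using assms unfolding FIN_prod_def by simp
qed

lemma choose_B:
  fixes h :: "nat \<times> nat \<Rightarrow> nat \<times> nat"
  assumes I: "is_ideal UNIV I"
  shows "\<exists>Bs. Bs \<notin> FIN_prod I \<and> (\<exists>c0. \<forall>c. c \<noteq> c0 \<longrightarrow> (\<exists>N. \<forall>p\<in>Bs. N \<le> fst p \<longrightarrow> fst (h p) \<noteq> c))"
proof -
  define P where "P n c = {k. fst (h (n,k)) = c}" for n c
  have emp: "{} \<in> I" using idealD(2)[OF I, of "{}"] by simp
  show ?thesis
  proof (cases "\<exists>c. infinite {n. P n c \<notin> I}")
    case True
    then obtain c where c: "infinite {n. P n c \<notin> I}" by blast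
    define Bs where "Bs = {p. P (fst p) c \<notin> I \<and> fst (h p) = c}"
    have colBs: "{k. (n,k) \<in> Bs} = (if P n c \<notin> I then P n c else {})" for n
      by (auto simp: Bs_def P_def)
    have "{n. {k. (n,k) \<in> Bs} \<notin> I} = {n. P n c \<notin> I}"
      using emp by (simp add: colBs)
    hence "Bs \<notin> FIN_prod I" using c unfolding FIN_prod_def by simp
    moreover have "\<forall>c'. c' \<noteq> c \<longrightarrow> (\<exists>N. \<forall>p\<in>Bs. N \<le> fst p \<longrightarrow> fst (h p) \<noteq> c')"
    proof (intro allI impI exI[of _ 0] ballI)
      fix c' p assume "c' \<noteq> c" "p \<in> Bs"
      then show "fst (h p) \<noteq> c'" by (simp add: Bs_def)
    qed
    ultimately show ?thesis by blast
  next
    case False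
    hence fin: "finite {n. P n c \<notin> I}" for c by blast
    define r where "r n = (LEAST c. c = n \<or> P n c \<notin> I)" for n
    have r_min: "P n c \<in> I" if "c < r n" for c n
      using not_less_Least[OF that[unfolded r_def]] by blast
    have r_prop: "r n = n \<or> P n (r n) \<notin> I" for n
      unfolding r_def by (rule LeastI[of _ n]) simp
    define Bs where "Bs = {p. r (fst p) \<le> fst (h p)}"
    have col: "{k. (n,k) \<in> Bs} \<notin> I" for n
    proof
      assume a: "{k. (n,k) \<in> Bs} \<in> I"
      have "(\<Union>c\<in>{..<r n}. P n c) \<in> I" using ideal_UN[OF I] r_min by blast
      then have "{k. (n,k) \<in> Bs} \<union> (\<Union>c\<in>{..<r n}. P n c) \<in> I" using idealD(4)[OF I] a by blast
      moreover have "{k. (n,k) \<in> Bs} \<union> (\<Union>c\<in>{..<r n}. P n c) = UNIV"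
      proof (rule set_eqI, rule iffI)
        fix k show "k \<in> {k. (n,k) \<in> Bs} \<union> (\<Union>c\<in>{..<r n}. P n c)"
        proof (cases "r n \<le> fst (h (n,k))")
          case True then show ?thesis by (simp add: Bs_def)
        next
          case False
          then have "k \<in> P n (fst (h (n,k)))" "fst (h (n,k)) \<in> {..<r n}" by (simp_all add: P_def)
          then show ?thesis by blast
        qed
      qed simp
      ultimately show False using idealD(1)[OF I] by simp
    qed
    hence "Bs \<notin> FIN_prod I" unfolding FIN_prod_def by simp
    moreover have "\<exists>N. \<forall>p\<in>Bs. N \<le> fst p \<longrightarrow> fst (h p) \<noteq> c" for c
    proof -
      have "{n. r n \<le> c} \<subseteq> {..c} \<union> (\<Union>c'\<in>{..c}. {n. P n c' \<notin> I})"
      proof (rule subsetI)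
        fix n assume "n \<in> {n. r n \<le> c}"
        then have rn: "r n \<le> c" by simp
        show "n \<in> {..c} \<union> (\<Union>c'\<in>{..c}. {n. P n c' \<notin> I})"
        proof (cases "r n = n")
          case True then show ?thesis using rn by simp
        next
          case False
          then have "P n (r n) \<notin> I" using r_prop by blast
          then show ?thesis using rn by blast
        qed
      qed
      moreover have "finite ({..c} \<union> (\<Union>c'\<in>{..c}. {n. P n c' \<notin> I}))"
        using fin by simp
      ultimately have "finite {n. r n \<le> c}" by (rule finite_subset)
      then obtain N where N: "\<forall>n\<in>{n. r n \<le> c}. n < N" unfolding finite_nat_set_iff_bounded by blast
      show ?thesis
      proof (intro exI ballI impI)
        fix p assume p: "p \<in> Bs" "N \<le> fst p"
        have "\<not> r (fst p) \<le> c"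
        proof
          assume "r (fst p) \<le> c"
          then have "fst p < N" using N by blast
          then show False using p(2) by simp
        qed
        then show "fst (h p) \<noteq> c" using p(1) by (simp add: Bs_def)
      qed
    qed
    ultimately show ?thesis by blast
  qed
qed

lemma Y_small:
  assumes I: "is_ideal UNIV I"
    and H: "\<forall>c. c \<noteq> c0 \<longrightarrow> (\<exists>N. \<forall>p\<in>Bs. N \<le> fst p \<longrightarrow> fst (h p) \<noteq> c)"
    and T: "\<forall>N. finite (Y - h ` (Bs \<inter> {p. N \<le> fst p}))"
  shows "Y \<in> FIN_prod I"
proof -
  have "{c. {k. (c,k) \<in> Y} \<notin> I} \<subseteq> {c0}"
  proof (rule subsetI, rule ccontr)
    fix c assume c: "c \<in> {c. {k. (c,k) \<in> Y} \<notin> I}" "c \<notin> {c0}"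
    then obtain N where N: "\<forall>p\<in>Bs. N \<le> fst p \<longrightarrow> fst (h p) \<noteq> c" using H by auto
    have "{k. (c,k) \<in> Y} \<subseteq> snd ` (Y - h ` (Bs \<inter> {p. N \<le> fst p}))"
    proof
      fix k assume "k \<in> {k. (c,k) \<in> Y}"
      moreover have "(c,k) \<notin> h ` (Bs \<inter> {p. N \<le> fst p})"
      proof
        assume "(c,k) \<in> h ` (Bs \<inter> {p. N \<le> fst p})"
        then obtain p where "p \<in> Bs" "N \<le> fst p" "h p = (c,k)" by auto
        then show False using N by (metis fst_conv)
      qed
      ultimately show "k \<in> snd ` (Y - h ` (Bs \<inter> {p. N \<le> fst p}))"
        by (intro image_eqI[of _ _ "(c,k)"]) auto
    qed
    then have "finite {k. (c,k) \<in> Y}" using T finite_subset by blast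
    then show False using c idealD(2)[OF I] by auto
  qed
  then show ?thesis unfolding FIN_prod_def by (auto intro: finite_subset)
qed

lemma rho_FIN_eq:
  assumes "almost_disjoint_family A" "finite K"
  shows "rho_FIN A B (A a - K) = B a - {p. fst p < max0 (A a \<inter> K)}"
proof -
  have "(THE a'. \<exists>K'. finite K' \<and> A a - K = A a' - K') = a"
  proof (rule the_equality)
    show "\<exists>K'. finite K' \<and> A a - K = A a - K'" using assms(2) by blast
  next
    fix a' assume "\<exists>K'. finite K' \<and> A a - K = A a' - K'"
    then obtain K' where K': "finite K'" "A a - K = A a' - K'" by blast
    show "a' = a"
    proof (rule ccontr)
      assume "a' \<noteq> a"
      then have "finite (A a \<inter> A a')" using assms(1) unfolding almost_disjoint_family_def by (metis inf_commute)
      moreover have "A a \<subseteq> (A a \<inter> A a') \<union> K" using K' by blast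
      ultimately have "finite (A a)" using assms(2) by (meson finite_UnI finite_subset)
      then show False using assms(1) unfolding almost_disjoint_family_def by blast
    qed
  qed
  moreover have "A a - (A a - K) = A a \<inter> K" by blast
  ultimately show ?thesis by (simp add: rho_FIN_def Let_def)
qed

theorem proposition5p4:
  fixes I J :: "nat set set"
    and A :: "nat set \<Rightarrow> nat set"
    and B :: "nat set \<Rightarrow> (nat \<times> nat) set"
  assumes "is_ideal UNIV I"
    and "is_ideal UNIV J"
    and "almost_disjoint_family A"
    and "bij_betw B UNIV (ideal_pos (FIN_prod I))"
  shows "\<not> katetov_equiv (AD_closure A) (rho_FIN A B) (ideal_pos J) (\<lambda>X. X)"
proof
  assume "katetov_equiv (AD_closure A) (rho_FIN A B) (ideal_pos J) (\<lambda>X. X)"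
  then obtain f :: "nat \<Rightarrow> nat \<times> nat" and g :: "nat \<times> nat \<Rightarrow> nat" where
    f: "\<forall>X1\<in>ideal_pos J. \<exists>X2\<in>AD_closure A. \<forall>K1. finite K1 \<longrightarrow>
          (\<exists>K2. finite K2 \<and> rho_FIN A B (X2 - K2) \<subseteq> f ` (X1 - K1))"
    and g: "\<forall>X1\<in>AD_closure A. \<exists>X2\<in>ideal_pos J. \<forall>K1. finite K1 \<longrightarrow>
          (\<exists>K2. finite K2 \<and> X2 - K2 \<subseteq> g ` rho_FIN A B (X1 - K1))"
  proof -
    assume H: "\<And>f g. \<forall>X1\<in>ideal_pos J. \<exists>X2\<in>AD_closure A. \<forall>K1. finite K1 \<longrightarrow>
          (\<exists>K2. finite K2 \<and> rho_FIN A B (X2 - K2) \<subseteq> f ` (X1 - K1)) \<Longrightarrow>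
      \<forall>X1\<in>AD_closure A. \<exists>X2\<in>ideal_pos J. \<forall>K1. finite K1 \<longrightarrow>
          (\<exists>K2. finite K2 \<and> X2 - K2 \<subseteq> g ` rho_FIN A B (X1 - K1)) \<Longrightarrow> thesis"
    from \<open>katetov_equiv _ _ _ _\<close> have
      "katetov_le (AD_closure A) (rho_FIN A B) (ideal_pos J) (\<lambda>X. X)"
      "katetov_le (ideal_pos J) (\<lambda>X. X) (AD_closure A) (rho_FIN A B)"
      unfolding katetov_equiv_def by simp_all
    then obtain f g where
      "\<forall>X1\<in>ideal_pos J. \<exists>X2\<in>AD_closure A. \<forall>K1. finite K1 \<longrightarrow>
          (\<exists>K2. finite K2 \<and> rho_FIN A B (X2 - K2) \<subseteq> f ` (X1 - K1))"
      "\<forall>X1\<in>AD_closure A. \<exists>X2\<in>ideal_pos J. \<forall>K1. finite K1 \<longrightarrow>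
          (\<exists>K2. finite K2 \<and> X2 - K2 \<subseteq> g ` rho_FIN A B (X1 - K1))"
      unfolding katetov_le_def by (elim exE) simp
    then show thesis by (rule H)
  qed
  obtain Bs c0 where Bs: "Bs \<notin> FIN_prod I"
    "\<forall>c. c \<noteq> c0 \<longrightarrow> (\<exists>N. \<forall>p\<in>Bs. N \<le> fst p \<longrightarrow> fst ((f \<circ> g) p) \<noteq> c)"
    using choose_B[OF assms(1), of "f \<circ> g"] by blast
  have imB: "B ` UNIV = ideal_pos (FIN_prod I)" using assms(4) by (rule bij_betw_imp_surj_on)
  have "Bs \<in> B ` UNIV" unfolding imB ideal_pos_def using Bs(1) by simp
  then obtain a0 where a0: "B a0 = Bs" by auto
  have "A a0 \<in> AD_closure A" unfolding AD_closure_def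
    by (rule CollectI, rule exI[of _ a0], rule exI[of _ "{}"]) simp
  with g obtain X where X: "X \<in> ideal_pos J"
    and XK: "\<forall>K1. finite K1 \<longrightarrow> (\<exists>K2. finite K2 \<and> X - K2 \<subseteq> g ` rho_FIN A B (A a0 - K1))"
    by (metis Diff_empty)
  have infA: "infinite (A a0)" using assms(3) unfolding almost_disjoint_family_def by blast
  have tail: "finite (f ` X - (f \<circ> g) ` (Bs \<inter> {p. N \<le> fst p}))" for N
  proof -
    have "\<not> (\<forall>n\<in>A a0. n < N)" using infA by (auto simp: finite_nat_set_iff_bounded)
    then obtain x where x: "x \<in> A a0" "N \<le> x" by (auto simp: not_less)
    have "finite {x}" by simp
    from XK[rule_format, OF this] obtain K2 where K2: "finite K2" "X - K2 \<subseteq> g ` rho_FIN A B (A a0 - {x})"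
      by (elim exE conjE)
    have "rho_FIN A B (A a0 - {x}) = Bs - {p. fst p < x}"
      using rho_FIN_eq[OF assms(3), of "{x}" B a0] x a0 by (simp add: max0_def)
    also have "\<dots> \<subseteq> Bs \<inter> {p. N \<le> fst p}" using x by auto
    finally have "g ` rho_FIN A B (A a0 - {x}) \<subseteq> g ` (Bs \<inter> {p. N \<le> fst p})" by (rule image_mono)
    with K2(2) have "X - K2 \<subseteq> g ` (Bs \<inter> {p. N \<le> fst p})" by (rule subset_trans)
    then have "f ` X - (f \<circ> g) ` (Bs \<inter> {p. N \<le> fst p}) \<subseteq> f ` K2"
    proof -
      assume sub: "X - K2 \<subseteq> g ` (Bs \<inter> {p. N \<le> fst p})"
      show ?thesis
      proof
        fix y assume y: "y \<in> f ` X - (f \<circ> g) ` (Bs \<inter> {p. N \<le> fst p})"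
        then obtain x where x: "x \<in> X" "y = f x" by blast
        show "y \<in> f ` K2"
        proof (cases "x \<in> K2")
          case True then show ?thesis using x by blast
        next
          case False
          then have "x \<in> g ` (Bs \<inter> {p. N \<le> fst p})" using sub x by blast
          then obtain q where "q \<in> Bs \<inter> {p. N \<le> fst p}" "x = g q" by blast
          then have "y \<in> (f \<circ> g) ` (Bs \<inter> {p. N \<le> fst p})" using x by simp
          then show ?thesis using y by blast
        qed
      qed
    qed
    then show ?thesis using K2(1) finite_subset by blast
  qed
  have "\<forall>N. finite (f ` X - (f \<circ> g) ` (Bs \<inter> {p. N \<le> fst p}))" using tail by blast
  then have "f ` X \<in> FIN_prod I" by (rule Y_small[OF assms(1) Bs(2)])
  moreover have "f ` X \<notin> FIN_prod I"
  proof -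
    obtain X2 where X2: "X2 \<in> AD_closure A" and
      "\<forall>K1. finite K1 \<longrightarrow> (\<exists>K2. finite K2 \<and> rho_FIN A B (X2 - K2) \<subseteq> f ` (X - K1))"
      using f X by blast
    then obtain K2 where K2: "finite K2" "rho_FIN A B (X2 - K2) \<subseteq> f ` X" by (metis Diff_empty finite.emptyI)
    from X2 obtain a K0 where aK: "X2 = A a - K0" "finite K0" unfolding AD_closure_def by blast
    have "X2 - K2 = A a - (K0 \<union> K2)" using aK by auto
    then have "rho_FIN A B (X2 - K2) = B a - {p. fst p < max0 (A a \<inter> (K0 \<union> K2))}"
      using rho_FIN_eq[OF assms(3)] aK K2 by simp
    moreover have "B a \<in> ideal_pos (FIN_prod I)" unfolding imB[symmetric] by (rule rangeI)
    then have "B a \<notin> FIN_prod I" unfolding ideal_pos_def by simp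
    ultimately have "rho_FIN A B (X2 - K2) \<notin> FIN_prod I" using pos_shift by simp
    then show ?thesis using FIN_mono[OF assms(1) K2(2)] by blast
  qed
  ultimately show False by contradiction
qed

end
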